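(* Let $n\ge 1$ and assume all matrices $\Lambda_{k-1}$ ($0\le k\le n+1$) and all elements $H_k,\tau_k$ ($0\le k\le n+1$) below are invertible. Then the monic noncommutative Laurent biorthogonal polynomials satisfy the three-term recurrence relation $$\lambda\big(P_n(\lambda)+a_nP_{n-1}(\lambda)\big)=P_{n+1}(\lambda)+b_nP_n(\lambda),$$ where $$a_n=-\tau_n\tau_{n-1}^{-1},\qquad b_n=a_nH_{n-1}H_n^{-1}.$$
   Context: Let $R$ be a skew field containing elements $m_i$, $i\in\mathbb Z$ (the moments), and equipped with an involution $a\mapsto a^*$ (an anti-automorphism of order two). For polynomials / formal Laurent series in a commuting indeterminate $\lambda$ with coefficients in $R$, extend the involution by $(\sum_i a_i\lambda^i)^*=\sum_i a_i^*\lambda^{-i}$. Define the pairing $$\Big\langle \sum_i a_i\lambda^i,\sum_j b_j\lambda^j\Big\rangle=\sum_{i,j}a_i\,m_{i-j}\,b_j^*.$$ It is left $R$-linear in the first argument, satisfies $\langle p,\beta q\rangle=\langle p,q\rangle\beta^*$, and $\langle\lambda p,q\rangle=\langle p,\lambda^{-1}q\rangle$. For $n\ge 0$, let $\Lambda_{n-1}=(m_{i-j})_{i,j=0}^{n-1}$, an $n\times n$ matrix over $R$, assumed invertible. The empty matrix is used for $n=0$. Let $\theta_n=(m_n,m_{n-1},\dots,m_1)$ be a row vector. The monic Laurent biorthogonal polynomials are $$P_n(\lambda)=\lambda^n-\theta_n\Lambda_{n-1}^{-1}(1,\lambda,\dots,\lambda^{n-1})^T,$$ with $P_0=1$. Equivalently,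 $P_n$ is the unique monic polynomial of degree $n$ with $\langle P_n,\lambda^j\rangle=0$ for $0\le j\le n-1$. The companion family $Q_n$ consists of monic polynomials of degree $n$ with $$\langle P_n,Q_m\rangle=H_n\delta_{nm}.$$ Here $$H_n=m_0-\theta_n\Lambda_{n-1}^{-1}(m_{-n},m_{-n+1},\dots,m_{-1})^T,$$ so that $H_0=m_0$, and $$\tau_n=m_{n+1}-\theta_n\Lambda_{n-1}^{-1}(m_1,m_2,\dots,m_n)^T,$$ so that $\tau_0=m_1$. (These are the quasideterminants of the corresponding bordered $(n+1)\times(n+1)$ moment matrices with boxed bottom-right entry; in particular $\tau_n=\langle P_n,\lambda^{-1}\rangle$.) *)

theory Defs
  imports Main
begin

text \<open>Matrices over a (possibly noncommutative) ring are represented as functions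
  nat => nat => 'a, of which only the entries with indices < k matter (k = size).
  Polynomials in the commuting indeterminate lambda are represented by their
  coefficient sequences nat => 'a (coefficient of lambda^j at index j).\<close>

definition involution :: "('a::ring_1 \<Rightarrow> 'a) \<Rightarrow> bool" where
  "involution s \<longleftrightarrow> (\<forall>a b. s (a + b) = s a + s b) \<and> (\<forall>a b. s (a * b) = s b * s a)
     \<and> s 1 = 1 \<and> (\<forall>a. s (s a) = a)"

definition sq_mat_mul :: "nat \<Rightarrow> (nat \<Rightarrow> nat \<Rightarrow> 'a::ring_1) \<Rightarrow> (nat \<Rightarrow> nat \<Rightarrow> 'a) \<Rightarrow> nat \<Rightarrow> nat \<Rightarrow> 'a" where
  "sq_mat_mul k A B i j = (\<Sum>l<k. A i l * B l j)"

definition is_inverse_of :: "nat \<Rightarrow> (nat \<Rightarrow> nat \<Rightarrow> 'a::ring_1) \<Rightarrow> (nat \<Rightarrow> nat \<Rightarrow> 'a) \<Rightarrow> bool" where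
  "is_inverse_of k B A \<longleftrightarrow>
     (\<forall>i<k. \<forall>j<k. sq_mat_mul k A B i j = (if i = j then 1 else 0)) \<and>
     (\<forall>i<k. \<forall>j<k. sq_mat_mul k B A i j = (if i = j then 1 else 0))"

definition sq_invertible :: "nat \<Rightarrow> (nat \<Rightarrow> nat \<Rightarrow> 'a::ring_1) \<Rightarrow> bool" where
  "sq_invertible k A \<longleftrightarrow> (\<exists>B. is_inverse_of k B A)"

definition sq_inv :: "nat \<Rightarrow> (nat \<Rightarrow> nat \<Rightarrow> 'a::ring_1) \<Rightarrow> nat \<Rightarrow> nat \<Rightarrow> 'a" where
  "sq_inv k A = (SOME B. is_inverse_of k B A)"

text \<open>Lambda_{k-1} = (m_{i-j})_{i,j=0}^{k-1}, a k x k matrix.\<close>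
definition moment_mat :: "(int \<Rightarrow> 'a) \<Rightarrow> nat \<Rightarrow> nat \<Rightarrow> 'a" where
  "moment_mat m i j = m (int i - int j)"

definition theta :: "(int \<Rightarrow> 'a) \<Rightarrow> nat \<Rightarrow> nat \<Rightarrow> 'a" where
  "theta m n i = m (int n - int i)"

definition thetaLinv :: "(int \<Rightarrow> 'a::ring_1) \<Rightarrow> nat \<Rightarrow> nat \<Rightarrow> 'a" where
  "thetaLinv m n j = (\<Sum>i<n. theta m n i * sq_inv n (moment_mat m) i j)"

text \<open>P_n(lambda) = lambda^n - theta_n Lambda_{n-1}^{-1} (1, lambda, ..., lambda^{n-1})^T.\<close>
definition LBP :: "(int \<Rightarrow> 'a::ring_1) \<Rightarrow> nat \<Rightarrow> nat \<Rightarrow> 'a" where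
  "LBP m n k = (if k = n then 1 else if k < n then - thetaLinv m n k else 0)"

definition Hq :: "(int \<Rightarrow> 'a::ring_1) \<Rightarrow> nat \<Rightarrow> 'a" where
  "Hq m n = m 0 - (\<Sum>j<n. thetaLinv m n j * m (int j - int n))"

definition tauq :: "(int \<Rightarrow> 'a::ring_1) \<Rightarrow> nat \<Rightarrow> 'a" where
  "tauq m n = m (int n + 1) - (\<Sum>j<n. thetaLinv m n j * m (int j + 1))"

definition shiftX :: "(nat \<Rightarrow> 'a::zero) \<Rightarrow> nat \<Rightarrow> 'a" where
  "shiftX p k = (if k = 0 then 0 else p (k - 1))"

definition cadd :: "(nat \<Rightarrow> 'a::plus) \<Rightarrow> (nat \<Rightarrow> 'a) \<Rightarrow> nat \<Rightarrow> 'a" where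
  "cadd p q k = p k + q k"

definition lscale :: "'a::times \<Rightarrow> (nat \<Rightarrow> 'a) \<Rightarrow> nat \<Rightarrow> 'a" where
  "lscale a p k = a * p k"

end

theory Submission
  imports Defs
begin

definition Lf :: "(int \<Rightarrow> 'a::ring_1) \<Rightarrow> nat \<Rightarrow> (nat \<Rightarrow> 'a) \<Rightarrow> int \<Rightarrow> 'a" where
  "Lf m N p j = (\<Sum>i<N. p i * m (int i - j))"

lemma Lf_trunc:
  assumes "\<forall>i\<ge>K. p i = 0" "K \<le> N"
  shows "Lf m N p j = Lf m K p j"
  unfolding Lf_def
  by (rule sum.mono_neutral_right) (use assms in auto)

lemma Lf_shift: "Lf m (Suc N) (shiftX p) j = Lf m N p (j - 1)"
  unfolding Lf_def sum.lessThan_Suc_shift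
  by (simp add: shiftX_def algebra_simps)

lemma Lf_cadd: "Lf m N (cadd p q) j = Lf m N p j + Lf m N q j"
  unfolding Lf_def cadd_def by (simp add: distrib_right sum.distrib)

lemma Lf_lscale: "Lf m N (lscale a p) j = a * Lf m N p j"
  unfolding Lf_def lscale_def by (simp add: sum_distrib_left mult.assoc)

lemma inv_spec: "sq_invertible k A \<Longrightarrow> is_inverse_of k (sq_inv k A) A"
  unfolding sq_invertible_def sq_inv_def by (metis someI_ex)

lemma thetaLinv_mul:
  fixes m :: "int \<Rightarrow> 'a::ring_1"
  assumes "sq_invertible n (moment_mat m)" "j < n"
  shows "(\<Sum>i<n. thetaLinv m n i * m (int i - int j)) = m (int n - int j)"
proof -
  let ?B = "sq_inv n (moment_mat m)"
  have inv: "is_inverse_of n ?B (moment_mat m)" using inv_spec[OF assms(1)] .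
  have "(\<Sum>i<n. thetaLinv m n i * m (int i - int j))
      = (\<Sum>i<n. \<Sum>k<n. theta m n k * (?B k i * moment_mat m i j))"
    unfolding thetaLinv_def moment_mat_def by (simp add: sum_distrib_right mult.assoc)
  also have "\<dots> = (\<Sum>k<n. theta m n k * sq_mat_mul n ?B (moment_mat m) k j)"
    unfolding sq_mat_mul_def by (subst sum.swap) (simp add: sum_distrib_left)
  also have "\<dots> = (\<Sum>k<n. theta m n k * (if k = j then 1 else 0))"
    using inv assms(2) unfolding is_inverse_of_def by (intro sum.cong) auto
  also have "\<dots> = (\<Sum>k<n. if k = j then theta m n j else 0)"
    by (intro sum.cong) auto
  also have "\<dots> = theta m n j" using assms(2) by simp
  finally show ?thesis by (simp add: theta_def)
qed

lemma LBP_expand: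
  "Lf m (Suc n) (LBP m n) j = (\<Sum>i<n. - thetaLinv m n i * m (int i - j)) + m (int n - j)"
  unfolding Lf_def LBP_def by (simp add: sum.lessThan_Suc)

lemma orth:
  fixes m :: "int \<Rightarrow> 'a::ring_1"
  assumes "sq_invertible n (moment_mat m)" "j < n"
  shows "Lf m (Suc n) (LBP m n) (int j) = 0"
  unfolding LBP_expand using thetaLinv_mul[OF assms]
  by (simp add: sum_negf)

lemma LBP_H: "Lf m (Suc n) (LBP m n) (int n) = Hq m n"
  unfolding LBP_expand Hq_def by (simp add: sum_negf)

lemma LBP_tau: "Lf m (Suc n) (LBP m n) (-1) = tauq m n"
  unfolding LBP_expand tauq_def by (simp add: sum_negf add.commute)

lemma LBP_zero: "i > n \<Longrightarrow> LBP m n i = 0"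
  unfolding LBP_def by simp

lemma vec_zero:
  fixes d :: "nat \<Rightarrow> 'a::ring_1"
  assumes inv: "is_inverse_of K B A" and h: "\<forall>j<K. (\<Sum>i<K. d i * A i j) = 0" and k: "k < K"
  shows "d k = 0"
proof -
  have "(\<Sum>i<K. d i * (if i = k then 1 else 0)) = (\<Sum>i<K. if i = k then d k else 0)"
    by (intro sum.cong) auto
  then have "d k = (\<Sum>i<K. d i * (if i = k then 1 else 0))" using k by simp
  also have "\<dots> = (\<Sum>i<K. d i * sq_mat_mul K A B i k)"
    using inv k unfolding is_inverse_of_def by (intro sum.cong) auto
  also have "\<dots> = (\<Sum>j<K. (\<Sum>i<K. d i * A i j) * B j k)"
    unfolding sq_mat_mul_def sum_distrib_left sum_distrib_right
    by (subst sum.swap) (simp add: mult.assoc)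
  also have "\<dots> = 0" using h by simp
  finally show ?thesis .
qed

theorem proposition1:
  fixes m :: "int \<Rightarrow> 'a::division_ring" and star :: "'a \<Rightarrow> 'a" and n :: nat
  assumes "involution star"
    and "n \<ge> 1"
    and "\<forall>k\<le>n+1. sq_invertible k (moment_mat m)"
    and "\<forall>k\<le>n+1. Hq m k \<noteq> 0"
    and "\<forall>k\<le>n+1. tauq m k \<noteq> 0"
  shows "let a = - tauq m n * inverse (tauq m (n - 1));
             b = a * Hq m (n - 1) * inverse (Hq m n)
         in shiftX (cadd (LBP m n) (lscale a (LBP m (n - 1))))
            = cadd (LBP m (n + 1)) (lscale b (LBP m n))"
proof -
  define a where "a = - tauq m n * inverse (tauq m (n - 1))"
  define b where "b = a * Hq m (n - 1) * inverse (Hq m n)"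
  define L where "L = shiftX (cadd (LBP m n) (lscale a (LBP m (n - 1))))"
  define R where "R = cadd (LBP m (n + 1)) (lscale b (LBP m n))"
  define d where "d k = L k - R k" for k
  have n1: "Suc (n - 1) = n" using assms(2) by simp
  have invn1: "sq_invertible (n - 1) (moment_mat m)" using assms(3) by simp
  have invn: "sq_invertible n (moment_mat m)" using assms(3) by simp
  have invn2: "sq_invertible (Suc (n + 1)) (moment_mat m) \<or> True" by simp
  have invSn: "sq_invertible (Suc n) (moment_mat m)" using assms(3) by simp
  have invSn1: "sq_invertible (n + 1) (moment_mat m)" using assms(3) by simp
  have ta: "a * tauq m (n - 1) = - tauq m n"
    using assms(5) unfolding a_def by (simp add: mult.assoc)
  have hb: "b * Hq m n = a * Hq m (n - 1)"
    using assms(4) unfolding b_def by (simp add: mult.assoc)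
  have dz: "d k = 0" if "k \<ge> n + 1" for k
  proof (cases "k = n + 1")
    case True
    then show ?thesis using n1
      by (simp add: d_def L_def R_def shiftX_def cadd_def lscale_def LBP_def)
  next
    case False
    then have "k - 1 > n" "k > n + 1" "k - 1 > n - 1" "k \<noteq> 0" using that by auto
    then show ?thesis
      by (simp add: d_def L_def R_def shiftX_def cadd_def lscale_def LBP_zero)
  qed
  have Pn: "Lf m (n + 1) (LBP m n) j = Lf m (Suc n) (LBP m n) j" for j by simp
  have Pn1: "Lf m (n + 1) (LBP m (n - 1)) j = Lf m (Suc (n - 1)) (LBP m (n - 1)) j" for j
    by (rule Lf_trunc) (auto simp: LBP_zero)
  have Pn2: "Lf m (Suc (Suc n)) (LBP m n) j = Lf m (Suc n) (LBP m n) j" for j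
    by (rule Lf_trunc) (auto simp: LBP_zero)
  have Ld: "Lf m (Suc (Suc n)) d (int j) = 0" if "j \<le> n" for j
  proof -
    have "Lf m (Suc (Suc n)) d (int j) = Lf m (Suc (Suc n)) L (int j) - Lf m (Suc (Suc n)) R (int j)"
      unfolding Lf_def d_def by (simp add: left_diff_distrib sum_subtractf)
    moreover have "Lf m (Suc (Suc n)) R (int j) = (if j = n then a * Hq m (n - 1) else 0)"
    proof -
      have "Lf m (Suc (Suc n)) R (int j) = Lf m (Suc (n + 1)) (LBP m (n + 1)) (int j)
          + b * Lf m (Suc n) (LBP m n) (int j)"
        unfolding R_def Lf_cadd Lf_lscale Pn2 by simp
      also have "\<dots> = b * Lf m (Suc n) (LBP m n) (int j)"
        using orth[OF invSn1[unfolded Suc_eq_plus1[symmetric]], of j] that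
        using assms(3) by (simp add: orth)
      finally show ?thesis using orth[OF invn, of j] that LBP_H[of m n] hb
        by (cases "j = n") auto
    qed
    moreover have "Lf m (Suc (Suc n)) L (int j) = (if j = n then a * Hq m (n - 1) else 0)"
    proof -
      have "Lf m (Suc (Suc n)) L (int j) = Lf m (Suc n) (LBP m n) (int j - 1)
            + a * Lf m (Suc (n - 1)) (LBP m (n - 1)) (int j - 1)"
        unfolding L_def Lf_shift Lf_cadd Lf_lscale Pn1[symmetric] by simp
      also have "\<dots> = (if j = n then a * Hq m (n - 1) else 0)"
      proof (cases "j = 0")
        case True
        then show ?thesis using LBP_tau[of m n] LBP_tau[of m "n - 1"] ta assms(2) by simp
      next
        case False
        then have jj: "int j - 1 = int (j - 1)" by simp
        show ?thesis
        proof (cases "j = n")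
          case True
          then show ?thesis unfolding jj using orth[OF invn, of "j - 1"] LBP_H[of m "n - 1"] n1 False
            by simp
        next
          case F2: False
          then show ?thesis unfolding jj
            using orth[OF invn, of "j - 1"] orth[OF invn1, of "j - 1"] that False n1
            by simp
        qed
      qed
      finally show ?thesis .
    qed
    ultimately show ?thesis by simp
  qed
  have Ld': "(\<Sum>i<Suc n. d i * moment_mat m i j) = 0" if "j < Suc n" for j
  proof -
    have "Lf m (Suc n) d (int j) = 0"
      using Ld[of j] that Lf_trunc[of "Suc n" d "Suc (Suc n)" m "int j"] dz by simp
    then show ?thesis unfolding Lf_def moment_mat_def .
  qed
  have "d k = 0" for k
  proof (cases "k < Suc n")
    case True
    show ?thesis by (rule vec_zero[OF inv_spec[OF invSn] _ True]) (use Ld' in auto)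
  next
    case False
    then show ?thesis using dz by simp
  qed
  then have "L = R" unfolding d_def by (intro ext) simp
  then show ?thesis unfolding L_def R_def a_def b_def Let_def .
qed

end
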